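(* For every chordal graph $G$, $\operatorname{box}(G)\le \omega(G)+1\le \Delta(G)+2$.
   Context: A graph is chordal if every cycle of length at least 4 has a chord (an edge joining two non-consecutive vertices of the cycle). $\omega(G)$ is the clique number (maximum size of a clique) and $\Delta(G)$ is the maximum degree. The boxicity $\operatorname{box}(G)$ is the minimum $b$ such that $G$ is the intersection graph of axis-parallel boxes in $\mathbb{R}^b$ (products of $b$ closed intervals), one box per vertex. *)

theory Defs
  imports Complex_Main
begin

definition simple_graph :: "'a set \<Rightarrow> ('a \<Rightarrow> 'a \<Rightarrow> bool) \<Rightarrow> bool" where
  "simple_graph V E \<longleftrightarrow> finite V \<and> (\<forall>x y. E x y \<longrightarrow> x \<in> V \<and> y \<in> V)
     \<and> (\<forall>x y. E x y \<longrightarrow> E y x) \<and> (\<forall>x. \<not> E x x)"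

definition is_cycle :: "'a set \<Rightarrow> ('a \<Rightarrow> 'a \<Rightarrow> bool) \<Rightarrow> 'a list \<Rightarrow> bool" where
  "is_cycle V E vs \<longleftrightarrow> length vs \<ge> 3 \<and> distinct vs \<and> set vs \<subseteq> V
     \<and> (\<forall>i < length vs. E (vs ! i) (vs ! ((i + 1) mod length vs)))"

definition has_chord :: "('a \<Rightarrow> 'a \<Rightarrow> bool) \<Rightarrow> 'a list \<Rightarrow> bool" where
  "has_chord E vs \<longleftrightarrow> (\<exists>i < length vs. \<exists>j < length vs. i \<noteq> j
     \<and> j \<noteq> (i + 1) mod length vs \<and> i \<noteq> (j + 1) mod length vs
     \<and> E (vs ! i) (vs ! j))"

definition chordal :: "'a set \<Rightarrow> ('a \<Rightarrow> 'a \<Rightarrow> bool) \<Rightarrow> bool" where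
  "chordal V E \<longleftrightarrow> (\<forall>vs. is_cycle V E vs \<and> length vs \<ge> 4 \<longrightarrow> has_chord E vs)"

definition is_clique :: "'a set \<Rightarrow> ('a \<Rightarrow> 'a \<Rightarrow> bool) \<Rightarrow> 'a set \<Rightarrow> bool" where
  "is_clique V E C \<longleftrightarrow> C \<subseteq> V \<and> (\<forall>x\<in>C. \<forall>y\<in>C. x \<noteq> y \<longrightarrow> E x y)"

definition clique_number :: "'a set \<Rightarrow> ('a \<Rightarrow> 'a \<Rightarrow> bool) \<Rightarrow> nat" where
  "clique_number V E = Max {card C | C. is_clique V E C}"

definition degree :: "'a set \<Rightarrow> ('a \<Rightarrow> 'a \<Rightarrow> bool) \<Rightarrow> 'a \<Rightarrow> nat" where
  "degree V E v = card {u \<in> V. E v u}"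

definition max_degree :: "'a set \<Rightarrow> ('a \<Rightarrow> 'a \<Rightarrow> bool) \<Rightarrow> nat" where
  "max_degree V E = Max (insert 0 (degree V E ` V))"

text \<open>A box representation in R^b: vertex x gets the box
  [lo x 0, hi x 0] \<times> ... \<times> [lo x (b-1), hi x (b-1)] (nonempty, closed);
  two distinct vertices are adjacent iff their boxes intersect.\<close>
definition box_rep :: "'a set \<Rightarrow> ('a \<Rightarrow> 'a \<Rightarrow> bool) \<Rightarrow> nat \<Rightarrow>
    ('a \<Rightarrow> nat \<Rightarrow> real) \<Rightarrow> ('a \<Rightarrow> nat \<Rightarrow> real) \<Rightarrow> bool" where
  "box_rep V E b lo hi \<longleftrightarrow>
     (\<forall>x\<in>V. \<forall>i<b. lo x i \<le> hi x i) \<and>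
     (\<forall>x\<in>V. \<forall>y\<in>V. x \<noteq> y \<longrightarrow>
        (E x y \<longleftrightarrow> (\<forall>i<b. {lo x i..hi x i} \<inter> {lo y i..hi y i} \<noteq> {})))"

definition boxicity :: "'a set \<Rightarrow> ('a \<Rightarrow> 'a \<Rightarrow> bool) \<Rightarrow> nat" where
  "boxicity V E = (LEAST b. \<exists>lo hi. box_rep V E b lo hi)"

end

theory Submission
  imports Defs
begin

lemma succ_idx: "successively R W \<longleftrightarrow> (\<forall>i. Suc i < length W \<longrightarrow> R (W!i) (W!Suc i))"
proof (induction R W rule: successively.induct)
  case (3 R x y xs)
  show ?case
    apply (simp add: 3)
    apply (rule iffI)
     apply (auto simp: nth_Cons split: nat.splits)
    done
qed auto

lemma shortcut:
  assumes "successively R W" "i + 2 \<le> j" "j < length W" "R (W!i) (W!j)"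
  defines "W' \<equiv> take (Suc i) W @ drop j W"
  shows "successively R W'" "length W' = length W + Suc i - j"
    "W'!0 = W!0" "W'!(length W' - 1) = W!(length W - 1)" "set W' \<subseteq> set W"
proof -
  have L: "length W' = length W + Suc i - j" using assms(2,3) by (simp add: W'_def)
  show "length W' = length W + Suc i - j" by fact
  have N: "W'!k = (if k \<le> i then W!k else W!(k + j - Suc i))" if "k < length W'" for k
    using that assms(2,3) L by (auto simp: W'_def nth_append add.commute)
  show "successively R W'"
    unfolding succ_idx
  proof (intro allI impI)
    fix k assume k: "Suc k < length W'"
    have s: "\<forall>i. Suc i < length W \<longrightarrow> R (W!i) (W!Suc i)" using assms(1) succ_idx by metis
    show "R (W'!k) (W'!Suc k)"
    proof (cases "k < i")
      case True then show ?thesis using N[of k] N[of "Suc k"] k s L assms(2,3) by auto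
    next
      case False
      show ?thesis
      proof (cases "k = i")
        case True then show ?thesis using N[of k] N[of "Suc k"] k L assms by auto
      next
        case False
        then have "k > i" using \<open>\<not> k < i\<close> by simp
        moreover have "Suc (k + j - Suc i) = k + j - i" "Suc (k + j - Suc i) < length W"
          using \<open>k > i\<close> k L assms(2,3) by auto
        moreover have "W'!k = W!(k + j - Suc i)" using N[of k] k \<open>k > i\<close> by auto
        moreover have "W'!Suc k = W!(k + j - i)" using N[of "Suc k"] k \<open>k > i\<close> by auto
        ultimately show ?thesis using s by metis
      qed
    qed
  qed
  show "W'!0 = W!0" using N[of 0] L assms by auto
  have "length W' - 1 > i" "length W' - 1 < length W'" "length W' - 1 + j - Suc i = length W - 1"
    using L assms(2,3) by auto
  then show "W'!(length W' - 1) = W!(length W - 1)" using N[of "length W' - 1"] by auto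
  show "set W' \<subseteq> set W" unfolding W'_def using set_take_subset set_drop_subset by (metis Un_least set_append)
qed

lemma no_induced_cycle:
  assumes sym: "\<forall>x y. E x y \<longrightarrow> E y x" and irr: "\<forall>x. \<not> E x x"
    and ch: "chordal X E"
    and XA: "A \<subseteq> X" "x \<in> X" "y \<in> X" "b \<in> X"
    and nA: "x \<notin> A" "y \<notin> A" "b \<notin> A"
    and Eb: "E b x" "E b y" and nxy: "\<not> E x y" "x \<noteq> y"
    and bA: "\<forall>u\<in>A. \<not> E b u"
    and P0: "P0 \<noteq> []" "set P0 \<subseteq> A" "successively E (x # P0 @ [y])"
  shows False
proof -
  define \<Psi> where "\<Psi> W \<longleftrightarrow> 3 \<le> length W \<and> W!0 = x \<and> W!(length W - 1) = y
     \<and> set W \<subseteq> insert x (insert y A) \<and> successively E W" for W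
  have "\<Psi> (x # P0 @ [y])" using P0 unfolding \<Psi>_def
    by (auto simp: nth_append Suc_le_eq)
  then have "\<exists>n. \<exists>W. \<Psi> W \<and> length W = n" by blast
  then obtain n where n: "\<exists>W. \<Psi> W \<and> length W = n"
    and nmin: "\<forall>m<n. \<not>(\<exists>W. \<Psi> W \<and> length W = m)"
    using exists_least_iff[of "\<lambda>n. \<exists>W. \<Psi> W \<and> length W = n"] by blast
  then obtain W where W: "\<Psi> W" "length W = n" by blast
  have min: "length W \<le> length W'" if "\<Psi> W'" for W'
    using nmin W(2) that not_less by blast
  define L where "L = length W"
  have WL: "3 \<le> L" "W!0 = x" "W!(L-1) = y" "set W \<subseteq> insert x (insert y A)" "successively E W"
    using W(1) unfolding \<Psi>_def L_def by auto
  have s: "\<forall>i. Suc i < L \<longrightarrow> E (W!i) (W!Suc i)" using WL(5) succ_idx L_def by metis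
  have ind: "\<not> E (W!i) (W!j)" if ij: "i + 2 \<le> j" "j < L" for i j
  proof
    assume e: "E (W!i) (W!j)"
    show False
    proof (cases "i = 0 \<and> j = L - 1")
      case True then show False using e WL nxy by auto
    next
      case False
      define W' where "W' = take (Suc i) W @ drop j W"
      note sc = shortcut[OF WL(5) ij(1) ij(2)[unfolded L_def] e, folded W'_def L_def]
      have "length W' \<ge> 3" using sc(2) False ij WL(1) by auto
      then have "\<Psi> W'" unfolding \<Psi>_def using sc WL by auto
      then have "L \<le> length W'" using min L_def by auto
      then show False using sc(2) ij by auto
    qed
  qed
  have neq: "W!i \<noteq> W!j" if ij: "i < j" "j < L" for i j
  proof
    assume eq: "W!i = W!j"
    consider "j = Suc i" | "j \<noteq> Suc i" "Suc j < L" | "j \<noteq> Suc i" "j = L - 1" "i = 0"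
      | "j \<noteq> Suc i" "j = L - 1" "i \<noteq> 0"
      using ij by linarith
    then show False
    proof cases
      case 1
      then have "E (W!i) (W!j)" using s[rule_format, of i] ij by simp
      then show False using eq irr by simp
    next
      case 2
      then have "E (W!j) (W!Suc j)" using s[rule_format, of j] by simp
      then have "E (W!i) (W!Suc j)" using eq by simp
      moreover have "i + 2 \<le> Suc j" using 2 ij by simp
      ultimately show False using ind[of i "Suc j"] 2 by simp
    next
      case 3
      then show False using eq WL(2,3) nxy(2) by simp
    next
      case 4
      then have "E (W!(i-1)) (W!Suc (i-1))" using s[rule_format, of "i-1"] ij by simp
      then have "E (W!(i-1)) (W!j)" using eq 4 by simp
      moreover have "i - 1 + 2 \<le> j" using 4 ij by simp
      ultimately show False using ind[of "i-1" j] ij by simp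
    qed
  qed
  have dist: "distinct W"
    unfolding distinct_conv_nth L_def[symmetric]
  proof (intro allI impI)
    fix i j assume "i < L" "j < L" "i \<noteq> j"
    then show "W!i \<noteq> W!j" using neq[of i j] neq[of j i] by (cases "i < j") auto
  qed
  have inA: "W!i \<in> A" if "0 < i" "i < L - 1" for i
  proof -
    have "i < length W" using that L_def by simp
    then have "W!i \<in> insert x (insert y A)" using WL(4) nth_mem by blast
    moreover have "W!0 \<noteq> W!i" using neq[of 0 i] that by simp
    moreover have "W!i \<noteq> W!(L-1)" using neq[of i "L-1"] that by simp
    ultimately have "W!i \<in> insert x (insert y A)" "W!i \<noteq> x" "W!i \<noteq> y" using WL(2,3) by auto
    then show ?thesis by auto
  qed
  define vs where "vs = W @ [b]"
  have bx: "b \<noteq> x" "b \<noteq> y" using Eb irr by auto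
  have bW: "b \<notin> set W" using WL(4) bx nA by auto
  have lvs: "length vs = Suc L" unfolding vs_def L_def by simp
  have vsW: "vs!i = W!i" if "i < L" for i using that unfolding vs_def L_def by (simp add: nth_append)
  have vsb: "vs!L = b" unfolding vs_def L_def by simp
  have cyc: "is_cycle X E vs"
    unfolding is_cycle_def
  proof (intro conjI allI impI)
    show "3 \<le> length vs" using lvs WL by simp
    show "distinct vs" using dist bW vs_def by simp
    show "set vs \<subseteq> X" using WL(4) XA vs_def by auto
    fix i assume i: "i < length vs"
    show "E (vs ! i) (vs ! ((i + 1) mod length vs))"
    proof (cases "Suc i < L")
      case True then show ?thesis using s vsW lvs by auto
    next
      case False
      then consider "i = L - 1" | "i = L" using i lvs by linarith
      then show ?thesis
      proof cases
        case 1
        then have "(i+1) mod length vs = L" using lvs WL by auto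
        then show ?thesis using 1 vsW vsb WL Eb sym by auto
      next
        case 2
        then have "(i+1) mod length vs = 0" using lvs by auto
        then show ?thesis using 2 vsW vsb WL Eb by auto
      qed
    qed
  qed
  have nc: "\<not> E (vs!i) (vs!j)" if "i < j" "j < Suc L" "j \<noteq> Suc i" "\<not> (i = 0 \<and> j = L)" for i j
  proof (cases "j = L")
    case True
    then have "0 < i" "i < L - 1" using that by auto
    then have "vs!i \<in> A" using inA vsW by auto
    then show ?thesis using True vsb bA sym by metis
  next
    case False
    then show ?thesis using ind[of i j] that vsW by auto
  qed
  have "has_chord E vs" using ch cyc lvs WL(1) unfolding chordal_def by auto
  then obtain i j where ij: "i < length vs" "j < length vs" "i \<noteq> j"
    "j \<noteq> (i + 1) mod length vs" "i \<noteq> (j + 1) mod length vs" "E (vs ! i) (vs ! j)"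
    unfolding has_chord_def by blast
  show False
  proof (cases "i < j")
    case True
    have "(i+1) mod length vs = i + 1" using True ij lvs by auto
    moreover have "\<not> (i = 0 \<and> j = L)"
    proof
      assume "i = 0 \<and> j = L"
      then have "(j+1) mod length vs = 0" "i = 0" using lvs by auto
      then show False using ij(5) by simp
    qed
    ultimately show False using nc[of i j] ij True lvs by auto
  next
    case False
    then have T: "j < i" using ij by auto
    have "(j+1) mod length vs = j + 1" using T ij lvs by auto
    moreover have "\<not> (j = 0 \<and> i = L)"
    proof
      assume "j = 0 \<and> i = L"
      then have "(i+1) mod length vs = 0" "j = 0" using lvs by auto
      then show False using ij(4) by simp
    qed
    moreover have "E (vs!j) (vs!i)" using ij sym by auto
    ultimately show False using nc[of j i] ij T lvs by auto
  qed
qed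


definition simp_in :: "'a set \<Rightarrow> ('a \<Rightarrow> 'a \<Rightarrow> bool) \<Rightarrow> 'a \<Rightarrow> bool" where
  "simp_in X E z \<longleftrightarrow> (\<forall>u\<in>X. \<forall>w\<in>X. E z u \<and> E z w \<and> u \<noteq> w \<longrightarrow> E u w)"

lemma chordal_subset: "chordal X E \<Longrightarrow> Y \<subseteq> X \<Longrightarrow> chordal Y E"
  unfolding chordal_def is_cycle_def by blast

lemma rtranclp_path:
  assumes "(\<lambda>p q. E p q \<and> p \<in> A \<and> q \<in> A)\<^sup>*\<^sup>* u u'" "u \<in> A"
  shows "\<exists>L. L \<noteq> [] \<and> hd L = u \<and> last L = u' \<and> set L \<subseteq> A \<and> successively E L"
  using assms(1)
proof (induction rule: rtranclp_induct)
  case base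
  then show ?case using assms(2) by (intro exI[of _ "[u]"]) auto
next
  case (step y z)
  then obtain L where L: "L \<noteq> []" "hd L = u" "last L = y" "set L \<subseteq> A" "successively E L" by blast
  show ?case
    by (intro exI[of _ "L @ [z]"]) (use L step(2) in \<open>auto simp: successively_append_iff\<close>)
qed

lemma rtranclp_sym_rev:
  assumes "\<forall>x y. R x y \<longrightarrow> R y x" "R\<^sup>*\<^sup>* a z"
  shows "R\<^sup>*\<^sup>* z a"
  using assms(2)
proof (induction rule: rtranclp_induct)
  case (step y z)
  then show ?case using assms(1) by (meson converse_rtranclp_into_rtranclp)
qed auto

lemma simplicial_exists:
  assumes sym: "\<forall>x y. E x y \<longrightarrow> E y x" and irr: "\<forall>x. \<not> E x x"
    and fin: "finite X" and ch: "chordal X E"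
  shows "(\<forall>x\<in>X. \<forall>y\<in>X. x \<noteq> y \<longrightarrow> E x y) \<or>
         (\<exists>z1\<in>X. \<exists>z2\<in>X. z1 \<noteq> z2 \<and> \<not> E z1 z2 \<and> simp_in X E z1 \<and> simp_in X E z2)"
  using fin ch
proof (induction X rule: finite_psubset_induct)
  case (psubset X)
  show ?case
  proof (cases "\<forall>x\<in>X. \<forall>y\<in>X. x \<noteq> y \<longrightarrow> E x y")
    case True then show ?thesis by blast
  next
    case False
    then obtain a b where ab: "a \<in> X" "b \<in> X" "a \<noteq> b" "\<not> E a b" by blast
    have nba: "\<not> E b a" using ab sym by blast
    define Y where "Y = {v\<in>X. v \<noteq> b \<and> \<not> E b v}"
    define R where "R = (\<lambda>p q. E p q \<and> p \<in> Y \<and> q \<in> Y)"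
    define A where "A = {z. R\<^sup>*\<^sup>* a z}"
    define S where "S = {s\<in>X. E b s \<and> (\<exists>u\<in>A. E s u)}"
    have aY: "a \<in> Y" using ab nba Y_def by auto
    have AY: "A \<subseteq> Y"
    proof
      fix z assume "z \<in> A"
      then have "R\<^sup>*\<^sup>* a z" by (simp add: A_def)
      then show "z \<in> Y"
        by (cases rule: rtranclp.cases) (auto simp: aY R_def)
    qed
    have aA: "a \<in> A" by (simp add: A_def)
    have AX: "A \<subseteq> X" using AY Y_def by auto
    have bA: "b \<notin> A" using AY Y_def by auto
    have Anb: "\<forall>u\<in>A. \<not> E b u" using AY Y_def by auto
    have F2: "w \<in> A \<or> w \<in> S" if "u \<in> A" "E u w" "w \<in> X" for u w
    proof (cases "w \<in> Y")
      case True
      then have "R u w" using that AY R_def by auto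
      then have "R\<^sup>*\<^sup>* a w" using that(1) A_def by (simp add: rtranclp.rtrancl_into_rtrancl)
      then show ?thesis by (simp add: A_def)
    next
      case False
      have "w \<noteq> b" using that Anb sym by blast
      then have "E b w" using False that Y_def by auto
      then show ?thesis using that sym S_def by blast
    qed
    have SA: "S \<inter> A = {}" using Anb S_def by auto
    have bS: "b \<notin> S" using irr S_def by auto
    have SX: "S \<subseteq> X" using S_def by auto
    define RA where "RA = (\<lambda>p q. E p q \<and> p \<in> A \<and> q \<in> A)"
    have toRA: "RA\<^sup>*\<^sup>* a z" if "R\<^sup>*\<^sup>* a z" for z
      using that
    proof (induction rule: rtranclp_induct)
      case (step y z)
      then have "y \<in> A" "z \<in> A" using A_def by (auto intro: rtranclp.rtrancl_into_rtrancl)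
      then have "RA y z" using step RA_def R_def by auto
      then show ?case using step by (meson rtranclp.rtrancl_into_rtrancl)
    qed auto
    have RAsym: "\<forall>x y. RA x y \<longrightarrow> RA y x" using sym RA_def by auto
    have Aconn: "RA\<^sup>*\<^sup>* u u'" if "u \<in> A" "u' \<in> A" for u u'
    proof -
      have "RA\<^sup>*\<^sup>* a u" "RA\<^sup>*\<^sup>* a u'" using that toRA A_def by auto
      then show ?thesis using rtranclp_sym_rev[OF RAsym] by (meson rtranclp_trans)
    qed
    have Sclique: "E x y" if xy: "x \<in> S" "y \<in> S" "x \<noteq> y" for x y
    proof (rule ccontr)
      assume nxy: "\<not> E x y"
      obtain u where u: "u \<in> A" "E x u" using xy S_def by auto
      obtain u' where u': "u' \<in> A" "E u' y" using xy S_def sym by blast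
      have c: "(\<lambda>p q. E p q \<and> p \<in> A \<and> q \<in> A)\<^sup>*\<^sup>* u u'"
        using Aconn[OF u(1) u'(1)] unfolding RA_def .
      obtain L where L: "L \<noteq> []" "hd L = u" "last L = u'" "set L \<subseteq> A" "successively E L"
        using rtranclp_path[OF c u(1)] by blast
      have "successively E (x # L @ [y])"
        using L u u' by (auto simp: successively_append_iff successively_Cons)
      moreover have "E b x" "E b y" using xy S_def by auto
      ultimately show False
        using no_induced_cycle[OF sym irr psubset.prems AX, of x y b L] xy SX SA ab(2) bA Anb nxy L
        by auto
    qed
    have sub1: "A \<union> S \<subset> X" using AX SX bA bS ab(2) by auto
    have IH1: "(\<forall>x\<in>A \<union> S. \<forall>y\<in>A \<union> S. x \<noteq> y \<longrightarrow> E x y) \<or>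
         (\<exists>z1\<in>A \<union> S. \<exists>z2\<in>A \<union> S. z1 \<noteq> z2 \<and> \<not> E z1 z2 \<and> simp_in (A \<union> S) E z1 \<and> simp_in (A \<union> S) E z2)"
      using psubset.IH[OF sub1] chordal_subset[OF psubset.prems] sub1 by blast
    obtain z where z: "z \<in> A" "simp_in (A \<union> S) E z"
    proof (cases "\<forall>x\<in>A \<union> S. \<forall>y\<in>A \<union> S. x \<noteq> y \<longrightarrow> E x y")
      case True
      then have "simp_in (A \<union> S) E a" unfolding simp_in_def by blast
      then show ?thesis using that aA by blast
    next
      case False
      then obtain z1 z2 where zz: "z1 \<in> A \<union> S" "z2 \<in> A \<union> S" "z1 \<noteq> z2" "\<not> E z1 z2"
        "simp_in (A \<union> S) E z1" "simp_in (A \<union> S) E z2" using IH1 by blast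
      then have "z1 \<in> A \<or> z2 \<in> A" using Sclique by blast
      then show ?thesis using that zz by blast
    qed
    have zX: "simp_in X E z"
      unfolding simp_in_def
    proof (intro ballI impI)
      fix u w assume "u \<in> X" "w \<in> X" "E z u \<and> E z w \<and> u \<noteq> w"
      then show "E u w" using F2[of z u] F2[of z w] z unfolding simp_in_def by blast
    qed
    have sub2: "X - A \<subset> X" using aA ab(1) by auto
    have IH2: "(\<forall>x\<in>X - A. \<forall>y\<in>X - A. x \<noteq> y \<longrightarrow> E x y) \<or>
         (\<exists>z1\<in>X - A. \<exists>z2\<in>X - A. z1 \<noteq> z2 \<and> \<not> E z1 z2 \<and> simp_in (X - A) E z1 \<and> simp_in (X - A) E z2)"
      using psubset.IH[OF sub2] chordal_subset[OF psubset.prems] sub2 by blast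
    obtain w where w: "w \<in> X - A" "w \<notin> S" "simp_in (X - A) E w"
    proof (cases "\<forall>x\<in>X - A. \<forall>y\<in>X - A. x \<noteq> y \<longrightarrow> E x y")
      case True
      then have "simp_in (X - A) E b" unfolding simp_in_def by blast
      then show ?thesis using that bA bS ab(2) by blast
    next
      case False
      then obtain z1 z2 where zz: "z1 \<in> X - A" "z2 \<in> X - A" "z1 \<noteq> z2" "\<not> E z1 z2"
        "simp_in (X - A) E z1" "simp_in (X - A) E z2" using IH2 by blast
      then have "z1 \<notin> S \<or> z2 \<notin> S" using Sclique by blast
      then show ?thesis using that zz by blast
    qed
    have wA: "\<not> E u w" if "u \<in> A" for u
      using F2[of u w] that w by blast
    have wX: "simp_in X E w"
      unfolding simp_in_def
    proof (intro ballI impI)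
      fix u v assume "u \<in> X" "v \<in> X" "E w u \<and> E w v \<and> u \<noteq> v"
      moreover have "u \<notin> A" "v \<notin> A" using wA sym calculation by blast+
      ultimately show "E u v" using w unfolding simp_in_def by blast
    qed
    have "z \<noteq> w" "\<not> E z w" using z w wA by auto
    then show ?thesis using zX wX z w AX by blast
  qed
qed


definition anc :: "('a \<Rightarrow> real) \<Rightarrow> ('a \<Rightarrow> real) \<Rightarrow> 'a \<Rightarrow> 'a \<Rightarrow> bool" where
  "anc s t u w \<longleftrightarrow> s u < s w \<and> t w \<le> t u"

definition Inv :: "'a set \<Rightarrow> ('a \<Rightarrow> 'a \<Rightarrow> bool) \<Rightarrow> nat \<Rightarrow> ('a \<Rightarrow> real) \<Rightarrow> ('a \<Rightarrow> real) \<Rightarrow> ('a \<Rightarrow> nat) \<Rightarrow> bool" where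
  "Inv X E k s t c \<longleftrightarrow>
   (\<forall>u\<in>X. s u < t u) \<and>
   (\<forall>u\<in>X. \<forall>w\<in>X. u \<noteq> w \<longrightarrow> t u < s w \<or> t w < s u \<or> anc s t u w \<or> anc s t w u) \<and>
   (\<forall>u\<in>X. \<forall>w\<in>X. E u w \<longrightarrow> anc s t u w \<or> anc s t w u) \<and>
   (\<forall>a\<in>X. \<forall>u\<in>X. \<forall>w\<in>X. E a w \<and> anc s t a u \<and> anc s t u w \<longrightarrow> E a u) \<and>
   (\<forall>u\<in>X. c u < k) \<and> (\<forall>u\<in>X. \<forall>w\<in>X. E u w \<longrightarrow> c u \<noteq> c w)"

lemma Inv_extend:
  assumes sym: "\<forall>x y. E x y \<longrightarrow> E y x" and irr: "\<forall>x. \<not> E x x"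
    and I: "Inv X E k s t c" and v: "v \<notin> X"
    and svt: "sv < tv"
    and e1: "\<forall>u\<in>X. tv < s u \<or> t u < sv \<or> (s u < sv \<and> tv \<le> t u)"
    and e2: "\<forall>u\<in>X. \<not> (sv < s u \<and> t u \<le> tv)"
    and e3: "\<forall>u\<in>X. E v u \<longrightarrow> s u < sv \<and> tv \<le> t u \<and> c u \<noteq> col"
    and e4: "\<forall>a\<in>X. \<forall>u\<in>X. E a v \<and> anc s t a u \<and> s u < sv \<and> tv \<le> t u \<longrightarrow> E a u"
    and col: "col < k"
  shows "Inv (insert v X) E k (s(v:=sv)) (t(v:=tv)) (c(v:=col))"
proof -
  let ?s = "s(v:=sv)" and ?t = "t(v:=tv)" and ?c = "c(v:=col)"
  have ancX: "anc ?s ?t u w = anc s t u w" if "u \<in> X" "w \<in> X" for u w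
    using that v by (auto simp: anc_def)
  have ancv1: "anc ?s ?t u v = (s u < sv \<and> tv \<le> t u)" if "u \<in> X" for u
    using that v by (auto simp: anc_def)
  have ancv2: "\<not> anc ?s ?t v u" if "u \<in> X" for u
    using that v e2 by (auto simp: anc_def)
  have ancvv: "\<not> anc ?s ?t v v" by (simp add: anc_def)
  have I1: "\<forall>u\<in>X. s u < t u" and I2: "\<forall>u\<in>X. \<forall>w\<in>X. u \<noteq> w \<longrightarrow> t u < s w \<or> t w < s u \<or> anc s t u w \<or> anc s t w u"
    and I3: "\<forall>u\<in>X. \<forall>w\<in>X. E u w \<longrightarrow> anc s t u w \<or> anc s t w u"
    and I4: "\<forall>a\<in>X. \<forall>u\<in>X. \<forall>w\<in>X. E a w \<and> anc s t a u \<and> anc s t u w \<longrightarrow> E a u"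
    and I5: "\<forall>u\<in>X. c u < k" and I6: "\<forall>u\<in>X. \<forall>w\<in>X. E u w \<longrightarrow> c u \<noteq> c w"
    using I unfolding Inv_def by blast+
  have sX: "?s u = s u" "?t u = t u" "?c u = c u" if "u \<in> X" for u using that v by auto
  show ?thesis
    unfolding Inv_def
  proof (intro conjI)
    show "\<forall>u\<in>insert v X. ?s u < ?t u" using I1 svt sX by auto
    show "\<forall>u\<in>insert v X. \<forall>w\<in>insert v X. u \<noteq> w \<longrightarrow> ?t u < ?s w \<or> ?t w < ?s u \<or> anc ?s ?t u w \<or> anc ?s ?t w u"
    proof (intro ballI impI)
      fix u w assume uw: "u \<in> insert v X" "w \<in> insert v X" "u \<noteq> w"
      show "?t u < ?s w \<or> ?t w < ?s u \<or> anc ?s ?t u w \<or> anc ?s ?t w u"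
      proof (cases "u = v")
        case True
        then have "w \<in> X" using uw by auto
        then show ?thesis using True e1 ancv1 sX v by auto
      next
        case False
        then have uX: "u \<in> X" using uw by auto
        show ?thesis
        proof (cases "w = v")
          case True
          then show ?thesis using uX e1 ancv1 sX v by auto
        next
          case False
          then have "w \<in> X" using uw by auto
          then show ?thesis using uX uw I2 ancX sX by auto
        qed
      qed
    qed
    show "\<forall>u\<in>insert v X. \<forall>w\<in>insert v X. E u w \<longrightarrow> anc ?s ?t u w \<or> anc ?s ?t w u"
    proof (intro ballI impI)
      fix u w assume uw: "u \<in> insert v X" "w \<in> insert v X" "E u w"
      show "anc ?s ?t u w \<or> anc ?s ?t w u"
      proof (cases "u = v")
        case True
        then have "w \<in> X" "w \<noteq> v" using uw irr by auto
        then show ?thesis using True e3 ancv1 uw by auto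
      next
        case False
        then have uX: "u \<in> X" using uw by auto
        show ?thesis
        proof (cases "w = v")
          case True
          then have "E v u" using uw sym by auto
          then show ?thesis using True uX e3 ancv1 by auto
        next
          case False
          then have "w \<in> X" using uw by auto
          then show ?thesis using uX uw I3 ancX by auto
        qed
      qed
    qed
    show "\<forall>a\<in>insert v X. \<forall>u\<in>insert v X. \<forall>w\<in>insert v X. E a w \<and> anc ?s ?t a u \<and> anc ?s ?t u w \<longrightarrow> E a u"
    proof (intro ballI impI)
      fix a u w assume auw: "a \<in> insert v X" "u \<in> insert v X" "w \<in> insert v X"
        "E a w \<and> anc ?s ?t a u \<and> anc ?s ?t u w"
      have au: "anc ?s ?t a u" and uw': "anc ?s ?t u w" and Eaw: "E a w" using auw(4) by auto
      have av: "a \<noteq> v"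
      proof
        assume "a = v"
        then show False using au ancv2[of u] ancvv auw(2) by (cases "u = v") auto
      qed
      have uv: "u \<noteq> v"
      proof
        assume "u = v"
        then show False using uw' ancv2[of w] ancvv auw(3) by (cases "w = v") auto
      qed
      have aX: "a \<in> X" "u \<in> X" using av uv auw(1,2) by auto
      have au0: "anc s t a u" using au ancX[OF aX] by simp
      show "E a u"
      proof (cases "w = v")
        case True
        have "s u < sv \<and> tv \<le> t u" using uw' True ancv1[OF aX(2)] by simp
        moreover have "E a v" using Eaw True by simp
        ultimately show ?thesis using e4 aX au0 by blast
      next
        case False
        then have wX: "w \<in> X" using auw by auto
        have "anc s t u w" using uw' ancX[OF aX(2) wX] by simp
        then show ?thesis using I4 aX wX Eaw au0 by blast
      qed
    qed
    show "\<forall>u\<in>insert v X. ?c u < k" using I5 col sX by auto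
    show "\<forall>u\<in>insert v X. \<forall>w\<in>insert v X. E u w \<longrightarrow> ?c u \<noteq> ?c w"
    proof (intro ballI impI)
      fix u w assume uw: "u \<in> insert v X" "w \<in> insert v X" "E u w"
      show "?c u \<noteq> ?c w"
      proof (cases "u = v")
        case True
        then have "w \<in> X" "w \<noteq> v" using uw irr by auto
        then show ?thesis using True e3 uw by auto
      next
        case False
        then have uX: "u \<in> X" using uw by auto
        show ?thesis
        proof (cases "w = v")
          case True
          then have "E v u" using uw sym by auto
          then show ?thesis using True uX e3 False by auto
        next
          case False
          then have "w \<in> X" using uw by auto
          then show ?thesis using uX uw I6 sX by auto
        qed
      qed
    qed
  qed
qed


lemma build:
  assumes sym: "\<forall>x y. E x y \<longrightarrow> E y x" and irr: "\<forall>x. \<not> E x x"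
    and fin: "finite V" and ch: "chordal V E"
    and hk: "\<forall>C. C \<subseteq> V \<longrightarrow> (\<forall>x\<in>C. \<forall>y\<in>C. x \<noteq> y \<longrightarrow> E x y) \<longrightarrow> card C \<le> k"
    and XV: "X \<subseteq> V"
  shows "\<exists>s t c. Inv X E k s t c"
proof -
  have "finite X" using XV fin finite_subset by blast
  then show ?thesis using XV
  proof (induction X rule: finite_psubset_induct)
    case (psubset X)
    show ?case
    proof (cases "X = {}")
      case True
      then show ?thesis by (intro exI[of _ "\<lambda>_. 0"] exI[of _ "\<lambda>_. 1"]) (simp add: Inv_def)
    next
      case False
      have chX: "chordal X E" using chordal_subset[OF ch psubset.prems] .
      obtain v where v: "v \<in> X" "simp_in X E v"
      proof (cases "\<forall>x\<in>X. \<forall>y\<in>X. x \<noteq> y \<longrightarrow> E x y")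
        case True
        obtain v where "v \<in> X" using False by blast
        moreover have "simp_in X E v" using True unfolding simp_in_def by blast
        ultimately show ?thesis using that by blast
      next
        case nc: False
        then show ?thesis using simplicial_exists[OF sym irr psubset.hyps(1) chX] that by blast
      qed
      define X' where "X' = X - {v}"
      have sub: "X' \<subset> X" using v X'_def by auto
      have X'V: "X' \<subseteq> V" using sub psubset.prems by auto
      have exI': "\<exists>s t c. Inv X' E k s t c" by (rule psubset.IH[OF sub X'V])
      then obtain s t c where I: "Inv X' E k s t c" by (elim exE)
      note I' = I[unfolded Inv_def]
      note I1 = I'[THEN conjunct1] and I2 = I'[THEN conjunct2, THEN conjunct1]
        and I3 = I'[THEN conjunct2, THEN conjunct2, THEN conjunct1]
        and I4 = I'[THEN conjunct2, THEN conjunct2, THEN conjunct2, THEN conjunct1]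
      have finX': "finite X'" using sub psubset.hyps(1) finite_subset by blast
      have vX': "v \<notin> X'" using X'_def by simp
      have XX: "X = insert v X'" using v X'_def by auto
      define K where "K = {w\<in>X'. E v w}"
      have finK: "finite K" using finX' K_def by simp
      have KX': "K \<subseteq> X'" using K_def by auto
      have Kcl: "E x y" if "x \<in> K" "y \<in> K" "x \<noteq> y" for x y
        using v(2) that K_def X'_def unfolding simp_in_def by auto
      have "card (insert v K) \<le> k"
      proof -
        have s1: "insert v K \<subseteq> V" using KX' X'V v psubset.prems by auto
        have s2: "\<forall>x\<in>insert v K. \<forall>y\<in>insert v K. x \<noteq> y \<longrightarrow> E x y"
        proof (intro ballI impI)
          fix x y assume xy: "x \<in> insert v K" "y \<in> insert v K" "x \<noteq> y"
          show "E x y"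
          proof (cases "x = v")
            case True then show ?thesis using xy K_def by auto
          next
            case False
            then have xK: "x \<in> K" using xy by auto
            show ?thesis
            proof (cases "y = v")
              case True then show ?thesis using xK K_def sym by blast
            next
              case False then show ?thesis using xK xy Kcl by auto
            qed
          qed
        qed
        show ?thesis using hk s1 s2 by blast
      qed
      moreover have "v \<notin> K" using vX' KX' by auto
      ultimately have cK: "card K < k" using finK by simp
      obtain col where col: "col < k" "col \<notin> c ` K"
      proof (rule ccontr)
        assume "\<not> thesis"
        then have "{..<k} \<subseteq> c ` K" using that by blast
        then have "card {..<k} \<le> card (c ` K)" using finK card_mono finite_imageI by blast
        also have "\<dots> \<le> card K" using finK card_image_le by blast
        finally show False using cK by simp
      qed
      have e3c: "\<forall>u\<in>X'. E v u \<longrightarrow> c u \<noteq> col" using col K_def by auto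
      show ?thesis
      proof (cases "K = {}")
        case True
        define M where "M = Max (insert 0 (t ` X'))"
        have tM: "t u \<le> M" if "u \<in> X'" for u using that finX' M_def by simp
        have "Inv (insert v X') E k (s(v:=M+1)) (t(v:=M+2)) (c(v:=col))"
        proof (rule Inv_extend[OF sym irr I vX'])
          show "M + 1 < M + 2" by simp
          show "\<forall>u\<in>X'. M + 2 < s u \<or> t u < M + 1 \<or> s u < M + 1 \<and> M + 2 \<le> t u"
            using tM by force
          show "\<forall>u\<in>X'. \<not> (M + 1 < s u \<and> t u \<le> M + 2)"
            using tM I1 by force
          show "\<forall>u\<in>X'. E v u \<longrightarrow> s u < M + 1 \<and> M + 2 \<le> t u \<and> c u \<noteq> col"
            using True K_def by auto
          show "\<forall>a\<in>X'. \<forall>u\<in>X'. E a v \<and> anc s t a u \<and> s u < M + 1 \<and> M + 2 \<le> t u \<longrightarrow> E a u"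
          proof (intro ballI impI)
            fix a u assume "a \<in> X'" "u \<in> X'" "E a v \<and> anc s t a u \<and> s u < M + 1 \<and> M + 2 \<le> t u"
            then have "a \<in> K" using K_def sym by blast
            then show "E a u" using True by simp
          qed
          show "col < k" by fact
        qed
        then show ?thesis using XX by blast
      next
        case False
        obtain d where d: "d \<in> K" "\<forall>w\<in>K. s w \<le> s d"
        proof -
          have "Max (s ` K) \<in> s ` K" using finK False by simp
          then obtain d where "d \<in> K" "s d = Max (s ` K)" by auto
          moreover have "\<forall>w\<in>K. s w \<le> Max (s ` K)" using finK by simp
          ultimately show ?thesis using that by metis
        qed
        have dX': "d \<in> X'" using d KX' by auto
        have Kanc: "w = d \<or> anc s t w d" if "w \<in> K" for w
        proof (cases "w = d")
          case False
          then have "E w d" using Kcl that d by auto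
          then have "anc s t w d \<or> anc s t d w" using I3 that KX' dX' by auto
          then show ?thesis using d that by (auto simp: anc_def)
        qed simp
        define m where "m = Min (insert (t d) (s ` {w\<in>X'. s d < s w}))"
        have finS: "finite (s ` {w\<in>X'. s d < s w})" using finX' by simp
        have m1: "m \<le> t d" using finS m_def by simp
        have m2: "m \<le> s w" if "w \<in> X'" "s d < s w" for w using finS m_def that by simp
        have m3: "s d < m"
        proof -
          have "m \<in> insert (t d) (s ` {w\<in>X'. s d < s w})" using finS m_def Min_in by blast
          then show ?thesis using I1 dX' by auto
        qed
        define x where "x = s d + (m - s d) / 3"
        define y where "y = s d + 2 * (m - s d) / 3"
        have xy: "s d < x" "x < y" "y < m" using m3 unfolding x_def y_def by (auto simp: field_simps)
        have key: "t u < x \<or> y < s u \<or> ((u = d \<or> anc s t u d) \<and> s u < x \<and> y \<le> t u)" if "u \<in> X'" for u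
        proof (cases "s d < s u")
          case True
          then show ?thesis using m2[OF that True] xy by auto
        next
          case False
          show ?thesis
          proof (cases "u = d")
            case True
            then show ?thesis using xy m1 by auto
          next
            case ud: False
            then have "t u < s d \<or> t d < s u \<or> anc s t u d \<or> anc s t d u" using I2 that dX' by auto
            then show ?thesis using False xy m1 I1 that dX' by (auto simp: anc_def)
          qed
        qed
        have key2: "u = d \<or> anc s t u d" if "u \<in> X'" "s u < x" "y \<le> t u" for u
          using key[OF that(1)] that xy by auto
        have "Inv (insert v X') E k (s(v:=x)) (t(v:=y)) (c(v:=col))"
        proof (rule Inv_extend[OF sym irr I vX'])
          show "x < y" using xy by simp
          show "\<forall>u\<in>X'. y < s u \<or> t u < x \<or> s u < x \<and> y \<le> t u"
            using key by blast
          show "\<forall>u\<in>X'. \<not> (x < s u \<and> t u \<le> y)"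
            using key I1 xy by force
          show "\<forall>u\<in>X'. E v u \<longrightarrow> s u < x \<and> y \<le> t u \<and> c u \<noteq> col"
          proof (intro ballI impI)
            fix u assume u: "u \<in> X'" "E v u"
            then have "u \<in> K" using K_def by simp
            then have "u = d \<or> anc s t u d" using Kanc by blast
            then show "s u < x \<and> y \<le> t u \<and> c u \<noteq> col"
              using xy m1 e3c u by (auto simp: anc_def)
          qed
          show "\<forall>a\<in>X'. \<forall>u\<in>X'. E a v \<and> anc s t a u \<and> s u < x \<and> y \<le> t u \<longrightarrow> E a u"
          proof (intro ballI impI)
            fix a u assume au: "a \<in> X'" "u \<in> X'" "E a v \<and> anc s t a u \<and> s u < x \<and> y \<le> t u"
            then have aK: "a \<in> K" using K_def sym by blast
            have ud: "u = d \<or> anc s t u d" using key2 au by blast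
            then have "a \<noteq> d" using au by (auto simp: anc_def)
            then have Ead: "E a d" using Kcl aK d by auto
            show "E a u"
            proof (cases "u = d")
              case True then show ?thesis using Ead by simp
            next
              case False
              then have "anc s t u d" using ud by simp
              then show ?thesis using I4 au dX' Ead by blast
            qed
          qed
          show "col < k" by fact
        qed
        then show ?thesis using XX by blast
      qed
    qed
  qed
qed


lemma ivl_int: "({l1..h1} \<inter> {l2..h2} \<noteq> {}) \<longleftrightarrow> (l1 \<le> h1 \<and> l2 \<le> h2 \<and> l1 \<le> h2 \<and> l2 \<le> (h1::real))"
proof
  assume "{l1..h1} \<inter> {l2..h2} \<noteq> {}"
  then obtain z where "z \<in> {l1..h1}" "z \<in> {l2..h2}" by blast
  then show "l1 \<le> h1 \<and> l2 \<le> h2 \<and> l1 \<le> h2 \<and> l2 \<le> h1" by auto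
next
  assume h: "l1 \<le> h1 \<and> l2 \<le> h2 \<and> l1 \<le> h2 \<and> l2 \<le> h1"
  then have "max l1 l2 \<in> {l1..h1} \<inter> {l2..h2}" by auto
  then show "{l1..h1} \<inter> {l2..h2} \<noteq> {}" by blast
qed

theorem theorem5:
  fixes V :: "'a set" and E :: "'a \<Rightarrow> 'a \<Rightarrow> bool"
  assumes "simple_graph V E" and "chordal V E"
  shows "boxicity V E \<le> clique_number V E + 1
       \<and> clique_number V E + 1 \<le> max_degree V E + 2"
proof -
  have fin: "finite V" and EV: "\<forall>x y. E x y \<longrightarrow> x \<in> V \<and> y \<in> V"
    and sym: "\<forall>x y. E x y \<longrightarrow> E y x" and irr: "\<forall>x. \<not> E x x"
    using assms(1) unfolding simple_graph_def by blast+
  define \<omega> where "\<omega> = clique_number V E"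
  define CS where "CS = {card C | C. is_clique V E C}"
  have finCS: "finite CS"
  proof -
    have "CS \<subseteq> card ` Pow V" unfolding CS_def is_clique_def by auto
    then show ?thesis using fin finite_subset by blast
  qed
  have "is_clique V E {}" by (simp add: is_clique_def)
  then have neCS: "CS \<noteq> {}" unfolding CS_def by blast
  have om: "\<omega> = Max CS" unfolding \<omega>_def clique_number_def CS_def by simp
  have hk: "\<forall>C. C \<subseteq> V \<longrightarrow> (\<forall>x\<in>C. \<forall>y\<in>C. x \<noteq> y \<longrightarrow> E x y) \<longrightarrow> card C \<le> \<omega>"
  proof (intro allI impI)
    fix C assume "C \<subseteq> V" "\<forall>x\<in>C. \<forall>y\<in>C. x \<noteq> y \<longrightarrow> E x y"
    then have "card C \<in> CS" unfolding CS_def is_clique_def by blast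
    then show "card C \<le> \<omega>" using om finCS by simp
  qed
  obtain s t c where I: "Inv V E \<omega> s t c"
    using build[OF sym irr fin assms(2) hk subset_refl] by blast
  note I' = I[unfolded Inv_def]
  note I1 = I'[THEN conjunct1] and I2 = I'[THEN conjunct2, THEN conjunct1]
    and I3 = I'[THEN conjunct2, THEN conjunct2, THEN conjunct1]
    and I4 = I'[THEN conjunct2, THEN conjunct2, THEN conjunct2, THEN conjunct1]
    and I5 = I'[THEN conjunct2, THEN conjunct2, THEN conjunct2, THEN conjunct2, THEN conjunct1]
    and I6 = I'[THEN conjunct2, THEN conjunct2, THEN conjunct2, THEN conjunct2, THEN conjunct2]
  define Q where "Q v i a \<longleftrightarrow> a \<in> V \<and> E a v \<and> anc s t a v \<and> c a = i" for v i a
  define af where "af v i = (if \<exists>a. Q v i a then (SOME a. Q v i a) else v)" for v i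
  define lo where "lo v i = (if i = \<omega> then s v else if c v = i then s v else s (af v i))" for v i
  define hi where "hi v i = (if i = \<omega> then t v else if c v = i then s v else t v)" for v i
  have A1: "af v i = v \<or> Q v i (af v i)" for v i
    unfolding af_def by (metis (mono_tags) someI_ex)
  have A1s: "s (af v i) \<le> s v" for v i
    using A1[of v i] unfolding Q_def anc_def by force
  have A2: "af v i = a'" if v: "v \<in> V" and a': "Q v i a'" for v i a'
  proof -
    have Q0: "Q v i (af v i)" unfolding af_def using a' by (metis (mono_tags) someI_ex)
    define a0 where "a0 = af v i"
    have q0: "a0 \<in> V" "E a0 v" "anc s t a0 v" "c a0 = i" using Q0 a0_def Q_def by auto
    have q1: "a' \<in> V" "E a' v" "anc s t a' v" "c a' = i" using a' Q_def by auto
    show ?thesis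
    proof (rule ccontr)
      assume ne: "af v i \<noteq> a'"
      then have "a0 \<noteq> a'" using a0_def by simp
      then have "t a0 < s a' \<or> t a' < s a0 \<or> anc s t a0 a' \<or> anc s t a' a0"
        using I2 q0 q1 by blast
      moreover have "\<not> t a0 < s a'" "\<not> t a' < s a0" using q0 q1 I1 v unfolding anc_def by force+
      moreover have "\<not> anc s t a0 a'"
      proof
        assume "anc s t a0 a'"
        then have "E a0 a'" using I4 q0 q1 v by blast
        then have "c a0 \<noteq> c a'" using I6 q0(1) q1(1) by blast
        then show False using q0(4) q1(4) by simp
      qed
      moreover have "\<not> anc s t a' a0"
      proof
        assume "anc s t a' a0"
        then have "E a' a0" using I4 q0 q1 v by blast
        then have "c a' \<noteq> c a0" using I6 q0(1) q1(1) by blast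
        then show False using q0(4) q1(4) by simp
      qed
      ultimately show False by blast
    qed
  qed
  define ok where "ok x y i \<longleftrightarrow> lo x i \<le> hi y i \<and> lo y i \<le> hi x i" for x y i
  have lohi: "lo x i \<le> hi x i" if "x \<in> V" for x i
    unfolding lo_def hi_def using A1s[of x i] I1 that by (auto intro: order.strict_implies_order)
  have L1: "ok x y i" if xy: "x \<in> V" "y \<in> V" "anc s t x y" "E x y" for x y i
  proof -
    have st: "s x < s y" "t y \<le> t x" "s x < t x" "s y < t y" using xy I1 unfolding anc_def by auto
    consider "i = \<omega>" | "i \<noteq> \<omega>" "c x = i" "c y = i" | "i \<noteq> \<omega>" "c x = i" "c y \<noteq> i"
      | "i \<noteq> \<omega>" "c x \<noteq> i" "c y = i" | "i \<noteq> \<omega>" "c x \<noteq> i" "c y \<noteq> i" by blast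
    then show ?thesis
    proof cases
      case 1 then show ?thesis using st unfolding ok_def lo_def hi_def by auto
    next
      case 2
      have "c x \<noteq> c y" using I6 xy(1,2,4) by blast
      then show ?thesis using 2 by simp
    next
      case 3
      have "Q y i x" unfolding Q_def using xy 3 by simp
      then have "af y i = x" using A2 xy by blast
      then show ?thesis using st 3 unfolding ok_def lo_def hi_def by auto
    next
      case 4
      then show ?thesis using st A1s[of x i] unfolding ok_def lo_def hi_def by auto
    next
      case 5
      then show ?thesis using st A1s[of x i] A1s[of y i] unfolding ok_def lo_def hi_def by auto
    qed
  qed
  have L2: "\<not> ok x y (c x)" if xy: "x \<in> V" "y \<in> V" "anc s t x y" "\<not> E x y" for x y
  proof -
    have st: "s x < s y" "t y \<le> t x" "s x < t x" "s y < t y" using xy I1 unfolding anc_def by auto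
    have cw: "c x \<noteq> \<omega>" using I5 xy by auto
    show ?thesis
    proof (cases "c y = c x")
      case True
      then show ?thesis using st cw unfolding ok_def lo_def hi_def by auto
    next
      case False
      have hx: "hi x (c x) = s x" using cw unfolding hi_def by simp
      have ly: "lo y (c x) = s (af y (c x))" using cw False unfolding lo_def by simp
      have "s x < s (af y (c x))"
      proof (cases "af y (c x) = y")
        case True then show ?thesis using st by simp
      next
        case False
        then have q: "Q y (c x) (af y (c x))" using A1 by metis
        define a0 where "a0 = af y (c x)"
        have q0: "a0 \<in> V" "E a0 y" "anc s t a0 y" "c a0 = c x" using q a0_def Q_def by auto
        have "a0 \<noteq> x" using q0 xy by auto
        then have "t a0 < s x \<or> t x < s a0 \<or> anc s t a0 x \<or> anc s t x a0"
          using I2 q0 xy by blast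
        moreover have "\<not> t a0 < s x" "\<not> t x < s a0" using q0 st unfolding anc_def by auto
        moreover have "\<not> anc s t a0 x"
        proof
          assume "anc s t a0 x"
          then have "E a0 x" using I4 q0 xy by blast
          then have "c a0 \<noteq> c x" using I6 q0(1) xy(1) by blast
          then show False using q0(4) by simp
        qed
        ultimately have "anc s t x a0" by blast
        then show ?thesis unfolding a0_def anc_def by simp
      qed
      then show ?thesis using hx ly unfolding ok_def by simp
    qed
  qed
  have L3: "\<not> ok x y \<omega>" if xy: "x \<in> V" "y \<in> V" "x \<noteq> y" "\<not> anc s t x y" "\<not> anc s t y x" for x y
  proof -
    have "t x < s y \<or> t y < s x" using I2 xy by blast
    then show ?thesis unfolding ok_def lo_def hi_def by auto
  qed
  have okI: "ok x y i = ({lo x i..hi x i} \<inter> {lo y i..hi y i} \<noteq> {})" if "x \<in> V" "y \<in> V" for x y i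
    using ivl_int lohi that unfolding ok_def by blast
  have oksym: "ok x y i = ok y x i" for x y i unfolding ok_def by auto
  have br: "box_rep V E (\<omega> + 1) lo hi"
    unfolding box_rep_def
  proof (intro conjI ballI allI impI)
    fix x i assume "x \<in> V" "i < \<omega> + 1"
    then show "lo x i \<le> hi x i" using lohi by blast
  next
    fix x y assume xy: "x \<in> V" "y \<in> V" "x \<noteq> y"
    show "E x y = (\<forall>i<\<omega> + 1. {lo x i..hi x i} \<inter> {lo y i..hi y i} \<noteq> {})"
    proof
      assume e: "E x y"
      have "anc s t x y \<or> anc s t y x" using I3 xy e by blast
      moreover have "E y x" using e sym by blast
      ultimately have "ok x y i" for i using L1[of x y i] L1[of y x i] xy e oksym by blast
      then show "\<forall>i<\<omega> + 1. {lo x i..hi x i} \<inter> {lo y i..hi y i} \<noteq> {}" using okI xy by blast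
    next
      assume all: "\<forall>i<\<omega> + 1. {lo x i..hi x i} \<inter> {lo y i..hi y i} \<noteq> {}"
      then have allok: "\<forall>i<\<omega> + 1. ok x y i" using okI xy by blast
      show "E x y"
      proof (rule ccontr)
        assume ne: "\<not> E x y"
        have ney: "\<not> E y x" using ne sym by blast
        have cx: "c x < \<omega>" "c y < \<omega>" using I5 xy by auto
        consider "anc s t x y" | "anc s t y x" | "\<not> anc s t x y" "\<not> anc s t y x" by blast
        then show False
        proof cases
          case 1 then show False using L2[OF xy(1,2) 1 ne] allok cx by auto
        next
          case 2 then show False using L2[OF xy(2,1) 2 ney] allok cx oksym by auto
        next
          case 3 then show False using L3[OF xy 3] allok by auto
        qed
      qed
    qed
  qed
  have part1: "boxicity V E \<le> \<omega> + 1"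
    unfolding boxicity_def using br by (blast intro: Least_le)
  have part2: "\<omega> \<le> max_degree V E + 1"
  proof -
    have "\<omega> \<in> CS" using om finCS neCS by simp
    then obtain C where C: "is_clique V E C" "card C = \<omega>" unfolding CS_def by blast
    show ?thesis
    proof (cases "C = {}")
      case True then show ?thesis using C by simp
    next
      case False
      then obtain v where v: "v \<in> C" by blast
      have CV: "C \<subseteq> V" using C unfolding is_clique_def by simp
      have cl: "\<forall>x\<in>C. \<forall>y\<in>C. x \<noteq> y \<longrightarrow> E x y" using C(1) unfolding is_clique_def by simp
      have sub: "C - {v} \<subseteq> {u \<in> V. E v u}"
      proof
        fix u assume u: "u \<in> C - {v}"
        then have "u \<in> C" "u \<noteq> v" by auto
        then have "E v u" using cl v by (metis)
        moreover have "u \<in> V" using CV \<open>u \<in> C\<close> by auto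
        ultimately show "u \<in> {u \<in> V. E v u}" by simp
      qed
      have finC: "finite C" using CV fin finite_subset by blast
      have "card (C - {v}) \<le> card {u \<in> V. E v u}"
        using sub fin by (intro card_mono) auto
      then have "card (C - {v}) \<le> degree V E v" unfolding degree_def .
      moreover have "card (C - {v}) = card C - 1" using finC v by (simp add: card_Diff_singleton)
      moreover have "degree V E v \<le> max_degree V E"
        unfolding max_degree_def using fin v CV by (intro Max_ge) auto
      moreover have "card C \<ge> 1" using finC v card_gt_0_iff[of C] by auto
      ultimately show ?thesis using C(2) by linarith
    qed
  qed
  show ?thesis using part1 part2 \<omega>_def by simp
qed

end
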